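(* Let $M$ be a partial commutative monoid and let $\mathrm{cl}$ be a strong closure operator on $\mathcal P(M)$ such that the collection $\mathcal C=\{X\subseteq M\mid \mathrm{cl}(X)=X\}$ of closed sets, ordered by inclusion, has a Heyting implication. Then $\mathcal C$ is a BI algebra with $\bot=\mathrm{cl}(\emptyset)$, $\top=M$, $X\wedge Y=X\cap Y$, $X\vee Y=\mathrm{cl}(X\cup Y)$, the given Heyting implication, $\mathsf{emp}=\mathrm{cl}(\mathbf 0)$, $X\ast Y=\mathrm{cl}(X\bullet Y)$ and $X-\!\!\ast\,Y=\mathrm{cl}(X-\!\!\bullet\,Y)$.
   Context: A partial commutative monoid $(M,\cdot,e)$ has a partial commutative, associative operation $\cdot$ with unit $e$; write $x\cdot y=\bot$ if undefined. On $\mathcal P(M)$ define $\mathbf 0=\{e\}$, $X\bullet Y=\{x\cdot y\mid x\in X,y\in Y,x\cdot y\ne\bot\}$, $X-\!\!\bullet\,Y=\{z\mid \forall x\in X.\ z\cdot x\ne\bot\Rightarrow z\cdot x\in Y\}$. A closure operator on $\mathcal P(M)$ is a map $\mathrm{cl}$ with $X\subseteq\mathrm{cl}(X)$, $X\subseteq Y\Rightarrow\mathrm{cl}(X)\subseteq\mathrm{cl}(Y)$, and $\mathrm{cl}(\mathrm{cl}(X))=\mathrm{cl}(X)$. It is strong if $\mathrm{cl}(X)\bullet Y\subseteq\mathrm{cl}(X\bullet Y)$ for all $X,Y$. A BI algebra is a tuple $(B,\bot,\top,\wedge,\vee,\to,\mathsf{emp},\ast,-\!\!\ast)$ where $(B,\bot,\top,\wedge,\vee,\to)$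 is a bounded Heyting algebra, $\ast$ is monotone, commutative, associative with unit $\mathsf{emp}$, and $a\ast b\le c\iff a\le b-\!\!\ast\,c$. *)

theory Defs
  imports Main
begin

text \<open>A partial commutative monoid on the whole type 'a: the partial operation is
  a function into 'a option (None = undefined), with unit e.  Associativity is
  Kleene equality of both bracketings.\<close>

definition pcm :: "('a \<Rightarrow> 'a \<Rightarrow> 'a option) \<Rightarrow> 'a \<Rightarrow> bool" where
  "pcm op e \<longleftrightarrow>
     (\<forall>x y. op x y = op y x) \<and>
     (\<forall>x y z. Option.bind (op x y) (\<lambda>w. op w z) = Option.bind (op y z) (\<lambda>w. op x w)) \<and>
     (\<forall>x. op e x = Some x)"

definition pzero :: "'a \<Rightarrow> 'a set" where
  "pzero e = {e}"

definition pstar :: "('a \<Rightarrow> 'a \<Rightarrow> 'a option) \<Rightarrow> 'a set \<Rightarrow> 'a set \<Rightarrow> 'a set" where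
  "pstar op X Y = {w. \<exists>x\<in>X. \<exists>y\<in>Y. op x y = Some w}"

definition pwand :: "('a \<Rightarrow> 'a \<Rightarrow> 'a option) \<Rightarrow> 'a set \<Rightarrow> 'a set \<Rightarrow> 'a set" where
  "pwand op X Y = {z. \<forall>x\<in>X. \<forall>w. op z x = Some w \<longrightarrow> w \<in> Y}"

definition closure_op :: "('a set \<Rightarrow> 'a set) \<Rightarrow> bool" where
  "closure_op cl \<longleftrightarrow>
     (\<forall>X. X \<subseteq> cl X) \<and> (\<forall>X Y. X \<subseteq> Y \<longrightarrow> cl X \<subseteq> cl Y) \<and> (\<forall>X. cl (cl X) = cl X)"

definition strong_closure_op :: "('a \<Rightarrow> 'a \<Rightarrow> 'a option) \<Rightarrow> ('a set \<Rightarrow> 'a set) \<Rightarrow> bool" where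
  "strong_closure_op op cl \<longleftrightarrow>
     closure_op cl \<and> (\<forall>X Y. pstar op (cl X) Y \<subseteq> cl (pstar op X Y))"

definition closed_sets :: "('a set \<Rightarrow> 'a set) \<Rightarrow> 'a set set" where
  "closed_sets cl = {X. cl X = X}"

definition is_heyting_imp ::
  "'b set \<Rightarrow> ('b \<Rightarrow> 'b \<Rightarrow> bool) \<Rightarrow> ('b \<Rightarrow> 'b \<Rightarrow> 'b) \<Rightarrow> ('b \<Rightarrow> 'b \<Rightarrow> 'b) \<Rightarrow> bool" where
  "is_heyting_imp B le meet imp \<longleftrightarrow>
     (\<forall>a\<in>B. \<forall>b\<in>B. imp a b \<in> B) \<and>
     (\<forall>a\<in>B. \<forall>b\<in>B. \<forall>c\<in>B. le (meet a b) c \<longleftrightarrow> le a (imp b c))"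

definition bounded_lattice_on ::
  "'b set \<Rightarrow> ('b \<Rightarrow> 'b \<Rightarrow> bool) \<Rightarrow> 'b \<Rightarrow> 'b \<Rightarrow> ('b \<Rightarrow> 'b \<Rightarrow> 'b) \<Rightarrow> ('b \<Rightarrow> 'b \<Rightarrow> 'b) \<Rightarrow> bool" where
  "bounded_lattice_on B le bt tp meet join \<longleftrightarrow>
     (\<forall>a\<in>B. le a a) \<and>
     (\<forall>a\<in>B. \<forall>b\<in>B. le a b \<and> le b a \<longrightarrow> a = b) \<and>
     (\<forall>a\<in>B. \<forall>b\<in>B. \<forall>c\<in>B. le a b \<and> le b c \<longrightarrow> le a c) \<and>
     bt \<in> B \<and> tp \<in> B \<and> (\<forall>a\<in>B. le bt a \<and> le a tp) \<and>
     (\<forall>a\<in>B. \<forall>b\<in>B. meet a b \<in> B \<and> join a b \<in> B) \<and>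
     (\<forall>a\<in>B. \<forall>b\<in>B. le (meet a b) a \<and> le (meet a b) b \<and>
        (\<forall>c\<in>B. le c a \<and> le c b \<longrightarrow> le c (meet a b))) \<and>
     (\<forall>a\<in>B. \<forall>b\<in>B. le a (join a b) \<and> le b (join a b) \<and>
        (\<forall>c\<in>B. le a c \<and> le b c \<longrightarrow> le (join a b) c))"

definition bi_algebra ::
  "'b set \<Rightarrow> ('b \<Rightarrow> 'b \<Rightarrow> bool) \<Rightarrow> 'b \<Rightarrow> 'b \<Rightarrow> ('b \<Rightarrow> 'b \<Rightarrow> 'b) \<Rightarrow> ('b \<Rightarrow> 'b \<Rightarrow> 'b)
    \<Rightarrow> ('b \<Rightarrow> 'b \<Rightarrow> 'b) \<Rightarrow> 'b \<Rightarrow> ('b \<Rightarrow> 'b \<Rightarrow> 'b) \<Rightarrow> ('b \<Rightarrow> 'b \<Rightarrow> 'b) \<Rightarrow> bool" where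
  "bi_algebra B le bt tp meet join imp emp star wand \<longleftrightarrow>
     bounded_lattice_on B le bt tp meet join \<and>
     is_heyting_imp B le meet imp \<and>
     emp \<in> B \<and>
     (\<forall>a\<in>B. \<forall>b\<in>B. star a b \<in> B \<and> wand a b \<in> B) \<and>
     (\<forall>a\<in>B. \<forall>a'\<in>B. \<forall>b\<in>B. \<forall>b'\<in>B. le a a' \<and> le b b' \<longrightarrow> le (star a b) (star a' b')) \<and>
     (\<forall>a\<in>B. \<forall>b\<in>B. star a b = star b a) \<and>
     (\<forall>a\<in>B. \<forall>b\<in>B. \<forall>c\<in>B. star (star a b) c = star a (star b c)) \<and>
     (\<forall>a\<in>B. star a emp = a) \<and>
     (\<forall>a\<in>B. \<forall>b\<in>B. \<forall>c\<in>B. le (star a b) c \<longleftrightarrow> le a (wand b c))"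

end

theory Submission
  imports Defs
begin

lemma pstar_comm: assumes "pcm op e" shows "pstar op X Y = pstar op Y X"
proof -
  have "\<And>x y. op x y = op y x" using assms unfolding pcm_def by blast
  then show ?thesis unfolding pstar_def by (intro set_eqI) (simp, metis)
qed

lemma pstar_assoc: assumes "pcm op e"
  shows "pstar op (pstar op X Y) Z = pstar op X (pstar op Y Z)"
proof -
  have A: "\<And>x y z. Option.bind (op x y) (\<lambda>w. op w z) = Option.bind (op y z) (\<lambda>w. op x w)"
    using assms unfolding pcm_def by blast
  show ?thesis
  proof (rule set_eqI, rule iffI)
    fix w assume "w \<in> pstar op (pstar op X Y) Z"
    then obtain x y z u where h: "x \<in> X" "y \<in> Y" "z \<in> Z" "op x y = Some u" "op u z = Some w"
      unfolding pstar_def by blast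
    have "Option.bind (op y z) (\<lambda>v. op x v) = Some w" using A[of x y z] h by simp
    then obtain v where "op y z = Some v" "op x v = Some w"
      by (cases "op y z") auto
    then show "w \<in> pstar op X (pstar op Y Z)" using h unfolding pstar_def by blast
  next
    fix w assume "w \<in> pstar op X (pstar op Y Z)"
    then obtain x y z u where h: "x \<in> X" "y \<in> Y" "z \<in> Z" "op y z = Some u" "op x u = Some w"
      unfolding pstar_def by blast
    have "Option.bind (op x y) (\<lambda>v. op v z) = Some w" using A[of x y z] h by simp
    then obtain v where "op x y = Some v" "op v z = Some w"
      by (cases "op x y") auto
    then show "w \<in> pstar op (pstar op X Y) Z" using h unfolding pstar_def by blast
  qed
qed

lemma pstar_unit: assumes "pcm op e" shows "pstar op X (pzero e) = X"
proof -
  have u: "\<And>x. op x e = Some x" using assms unfolding pcm_def by metis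
  show ?thesis unfolding pstar_def pzero_def using u by auto
qed

lemma pstar_mono: "X \<subseteq> X' \<Longrightarrow> Y \<subseteq> Y' \<Longrightarrow> pstar op X Y \<subseteq> pstar op X' Y'"
  unfolding pstar_def by blast

lemma pwand_adj: "pstar op X Y \<subseteq> Z \<longleftrightarrow> X \<subseteq> pwand op Y Z"
  unfolding pstar_def pwand_def by blast

theorem theorem5p8:
  fixes op :: "'a \<Rightarrow> 'a \<Rightarrow> 'a option" and e :: 'a
    and cl :: "'a set \<Rightarrow> 'a set" and imp :: "'a set \<Rightarrow> 'a set \<Rightarrow> 'a set"
  assumes "pcm op e"
    and "strong_closure_op op cl"
    and "is_heyting_imp (closed_sets cl) (\<subseteq>) (\<inter>) imp"
  shows "bi_algebra (closed_sets cl) (\<subseteq>) (cl {}) UNIV (\<inter>) (\<lambda>X Y. cl (X \<union> Y)) imp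
           (cl (pzero e)) (\<lambda>X Y. cl (pstar op X Y)) (\<lambda>X Y. cl (pwand op X Y))"
proof -
  have cdef: "closure_op cl" and strL0: "\<forall>X Y. pstar op (cl X) Y \<subseteq> cl (pstar op X Y)"
    using assms(2) unfolding strong_closure_op_def by auto
  have ext: "\<And>X. X \<subseteq> cl X" using cdef unfolding closure_op_def by auto
  have mono: "\<And>X Y. X \<subseteq> Y \<Longrightarrow> cl X \<subseteq> cl Y" using cdef unfolding closure_op_def by auto
  have idem: "\<And>X. cl (cl X) = cl X" using cdef unfolding closure_op_def by auto
  have strL: "\<And>X Y. pstar op (cl X) Y \<subseteq> cl (pstar op X Y)" using strL0 by auto
  have strR: "\<And>X Y. pstar op X (cl Y) \<subseteq> cl (pstar op X Y)"
  proof -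
    fix X Y
    have "pstar op X (cl Y) = pstar op (cl Y) X" by (rule pstar_comm[OF assms(1)])
    also have "\<dots> \<subseteq> cl (pstar op Y X)" by (rule strL)
    also have "pstar op Y X = pstar op X Y" by (rule pstar_comm[OF assms(1)])
    finally show "pstar op X (cl Y) \<subseteq> cl (pstar op X Y)" .
  qed
  have cs: "\<And>X. X \<in> closed_sets cl \<longleftrightarrow> cl X = X" unfolding closed_sets_def by simp
  have univ: "cl UNIV = UNIV" using ext[of UNIV] by auto
  have inter: "\<And>X Y. cl X = X \<Longrightarrow> cl Y = Y \<Longrightarrow> cl (X \<inter> Y) = X \<inter> Y"
  proof -
    fix X Y assume "cl X = X" "cl Y = Y"
    then have "cl (X \<inter> Y) \<subseteq> X" "cl (X \<inter> Y) \<subseteq> Y" using mono[of "X \<inter> Y" X] mono[of "X \<inter> Y" Y] by auto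
    then show "cl (X \<inter> Y) = X \<inter> Y" using ext[of "X \<inter> Y"] by blast
  qed
  have c1: "\<And>X Y Z. cl (pstar op (cl (pstar op X Y)) Z) = cl (pstar op (pstar op X Y) Z)"
  proof (rule subset_antisym)
    fix X Y Z
    show "cl (pstar op (cl (pstar op X Y)) Z) \<subseteq> cl (pstar op (pstar op X Y) Z)"
      using mono[OF strL[of "pstar op X Y" Z]] idem by simp
    show "cl (pstar op (pstar op X Y) Z) \<subseteq> cl (pstar op (cl (pstar op X Y)) Z)"
      by (rule mono, rule pstar_mono[OF ext order_refl])
  qed
  have c2: "\<And>X Y Z. cl (pstar op X (cl (pstar op Y Z))) = cl (pstar op X (pstar op Y Z))"
  proof (rule subset_antisym)
    fix X Y Z
    show "cl (pstar op X (cl (pstar op Y Z))) \<subseteq> cl (pstar op X (pstar op Y Z))"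
      using mono[OF strR[of X "pstar op Y Z"]] idem by simp
    show "cl (pstar op X (pstar op Y Z)) \<subseteq> cl (pstar op X (cl (pstar op Y Z)))"
      by (rule mono, rule pstar_mono[OF order_refl ext])
  qed
  have unit: "\<And>X. cl X = X \<Longrightarrow> cl (pstar op X (cl (pzero e))) = X"
  proof -
    fix X assume X: "cl X = X"
    have "pstar op X (cl (pzero e)) \<subseteq> X"
      using strR[of X "pzero e"] pstar_unit[OF assms(1)] X by simp
    moreover have "X \<subseteq> pstar op X (cl (pzero e))"
    proof -
      have "pstar op X (pzero e) \<subseteq> pstar op X (cl (pzero e))"
        by (rule pstar_mono[OF order_refl ext])
      then show ?thesis using pstar_unit[OF assms(1), of X] by simp
    qed
    ultimately have "pstar op X (cl (pzero e)) = X" by (rule subset_antisym)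
    then show "cl (pstar op X (cl (pzero e))) = X" using X by simp
  qed
  have adj1: "\<And>X Y Z. cl Z = Z \<Longrightarrow> cl (pstar op X Y) \<subseteq> Z \<Longrightarrow> X \<subseteq> cl (pwand op Y Z)"
  proof -
    fix X Y Z assume Z: "cl Z = Z" and h: "cl (pstar op X Y) \<subseteq> Z"
    have "pstar op X Y \<subseteq> Z" using ext[of "pstar op X Y"] h by (rule order_trans)
    then have "X \<subseteq> pwand op Y Z" by (simp only: pwand_adj)
    then show "X \<subseteq> cl (pwand op Y Z)" using ext[of "pwand op Y Z"] by (rule order_trans)
  qed
  have adj2: "\<And>X Y Z. cl Z = Z \<Longrightarrow> X \<subseteq> cl (pwand op Y Z) \<Longrightarrow> cl (pstar op X Y) \<subseteq> Z"
  proof -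
    fix X Y Z assume Z: "cl Z = Z" and h: "X \<subseteq> cl (pwand op Y Z)"
    have "pstar op X Y \<subseteq> pstar op (cl (pwand op Y Z)) Y" using pstar_mono[OF h order_refl] .
    also have "\<dots> \<subseteq> cl (pstar op (pwand op Y Z) Y)" by (rule strL)
    also have "pstar op (pwand op Y Z) Y \<subseteq> Z" using pwand_adj[of op "pwand op Y Z" Y Z] by simp
    then have "cl (pstar op (pwand op Y Z) Y) \<subseteq> cl Z" by (rule mono)
    finally have "pstar op X Y \<subseteq> Z" using Z by simp
    then have "cl (pstar op X Y) \<subseteq> cl Z" by (rule mono)
    then show "cl (pstar op X Y) \<subseteq> Z" using Z by simp
  qed
  have adj: "\<And>X Y Z. cl Z = Z \<Longrightarrow> cl (pstar op X Y) \<subseteq> Z \<longleftrightarrow> X \<subseteq> cl (pwand op Y Z)"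
    using adj1 adj2 by (intro iffI)
  have L: "bounded_lattice_on (closed_sets cl) (\<subseteq>) (cl {}) UNIV (\<inter>) (\<lambda>X Y. cl (X \<union> Y))"
  proof -
    let ?B = "closed_sets cl"
    have l1: "\<forall>a\<in>?B. a \<subseteq> a" by simp
    have l2: "\<forall>a\<in>?B. \<forall>b\<in>?B. a \<subseteq> b \<and> b \<subseteq> a \<longrightarrow> a = b" by auto
    have l3: "\<forall>a\<in>?B. \<forall>b\<in>?B. \<forall>c\<in>?B. a \<subseteq> b \<and> b \<subseteq> c \<longrightarrow> a \<subseteq> c" by auto
    have l4: "cl {} \<in> ?B" unfolding cs by (rule idem)
    have l5: "UNIV \<in> ?B" unfolding cs by (rule univ)
    have l6: "\<forall>a\<in>?B. cl {} \<subseteq> a \<and> a \<subseteq> UNIV"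
    proof
      fix a assume "a \<in> ?B" then have "cl a = a" unfolding cs .
      then show "cl {} \<subseteq> a \<and> a \<subseteq> UNIV" using mono[of "{}" a] by auto
    qed
    have l7: "\<forall>a\<in>?B. \<forall>b\<in>?B. a \<inter> b \<in> ?B \<and> cl (a \<union> b) \<in> ?B"
    proof (intro ballI conjI)
      fix a b assume "a \<in> ?B" "b \<in> ?B"
      then have "cl a = a" "cl b = b" unfolding cs by auto
      then show "a \<inter> b \<in> ?B" unfolding cs by (rule inter)
      show "cl (a \<union> b) \<in> ?B" unfolding cs by (rule idem)
    qed
    have l8: "\<forall>a\<in>?B. \<forall>b\<in>?B. a \<inter> b \<subseteq> a \<and> a \<inter> b \<subseteq> b \<and>
        (\<forall>c\<in>?B. c \<subseteq> a \<and> c \<subseteq> b \<longrightarrow> c \<subseteq> a \<inter> b)" by auto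
    have l9: "\<forall>a\<in>?B. \<forall>b\<in>?B. a \<subseteq> cl (a \<union> b) \<and> b \<subseteq> cl (a \<union> b) \<and>
        (\<forall>c\<in>?B. a \<subseteq> c \<and> b \<subseteq> c \<longrightarrow> cl (a \<union> b) \<subseteq> c)"
    proof (intro ballI conjI impI)
      fix a b assume "a \<in> ?B" "b \<in> ?B"
      show "a \<subseteq> cl (a \<union> b)" using ext[of "a \<union> b"] by auto
      show "b \<subseteq> cl (a \<union> b)" using ext[of "a \<union> b"] by auto
      fix c assume "c \<in> ?B" "a \<subseteq> c \<and> b \<subseteq> c"
      then have "cl c = c" "a \<union> b \<subseteq> c" unfolding cs by auto
      then show "cl (a \<union> b) \<subseteq> c" using mono[of "a \<union> b" c] by auto
    qed
    show ?thesis unfolding bounded_lattice_on_def using l1 l2 l3 l4 l5 l6 l7 l8 l9 by (intro conjI)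
  qed
  have M: "\<And>a a' b b'. a \<subseteq> a' \<Longrightarrow> b \<subseteq> b' \<Longrightarrow> cl (pstar op a b) \<subseteq> cl (pstar op a' b')"
    by (rule mono, rule pstar_mono)
  have C: "\<And>a b. cl (pstar op a b) = cl (pstar op b a)" using pstar_comm[OF assms(1)] by metis
  have AS: "\<And>a b c. cl (pstar op (cl (pstar op a b)) c) = cl (pstar op a (cl (pstar op b c)))"
    using c1 c2 pstar_assoc[OF assms(1)] by simp
  have H: "is_heyting_imp (closed_sets cl) (\<subseteq>) (\<inter>) imp" by (rule assms(3))
  have E: "cl (pzero e) \<in> closed_sets cl" unfolding cs by (rule idem)
  have SW: "\<forall>a\<in>closed_sets cl. \<forall>b\<in>closed_sets cl. cl (pstar op a b) \<in> closed_sets cl \<and> cl (pwand op a b) \<in> closed_sets cl"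
    unfolding closed_sets_def using idem by simp
  have MM: "\<forall>a\<in>closed_sets cl. \<forall>a'\<in>closed_sets cl. \<forall>b\<in>closed_sets cl. \<forall>b'\<in>closed_sets cl. a \<subseteq> a' \<and> b \<subseteq> b' \<longrightarrow> cl (pstar op a b) \<subseteq> cl (pstar op a' b')"
    using M by blast
  have CC: "\<forall>a\<in>closed_sets cl. \<forall>b\<in>closed_sets cl. cl (pstar op a b) = cl (pstar op b a)"
    using C by blast
  have AA: "\<forall>a\<in>closed_sets cl. \<forall>b\<in>closed_sets cl. \<forall>c\<in>closed_sets cl. cl (pstar op (cl (pstar op a b)) c) = cl (pstar op a (cl (pstar op b c)))"
    using AS by blast
  have UU: "\<forall>a\<in>closed_sets cl. cl (pstar op a (cl (pzero e))) = a"
  proof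
    fix a assume "a \<in> closed_sets cl" then have "cl a = a" unfolding cs .
    then show "cl (pstar op a (cl (pzero e))) = a" by (rule unit)
  qed
  have DD: "\<forall>a\<in>closed_sets cl. \<forall>b\<in>closed_sets cl. \<forall>c\<in>closed_sets cl. cl (pstar op a b) \<subseteq> c \<longleftrightarrow> a \<subseteq> cl (pwand op b c)"
  proof (intro ballI)
    fix a b c assume "c \<in> closed_sets cl" then have "cl c = c" unfolding cs .
    then show "cl (pstar op a b) \<subseteq> c \<longleftrightarrow> a \<subseteq> cl (pwand op b c)" by (rule adj)
  qed
  show ?thesis
    unfolding bi_algebra_def using L H E SW MM CC AA UU DD by (intro conjI)
qed

end
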